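(* Assume $\rho_{i,j}\ge 0$ for all cells, and consider the forward Euler finite-volume update of the intensity \[ \rho^{+}_{i,j} =\rho_{i,j} -\Delta z\left( \frac{F^x_{i+\frac12,j}-F^x_{i-\frac12,j}}{\Delta x} +\frac{F^y_{i,j+\frac12}-F^y_{i,j-\frac12}}{\Delta y} \right), \] with boundary face fluxes set to zero, $F^x_{\frac12,j}=F^x_{N_x+\frac12,j}=0$, $F^y_{i,\frac12}=F^y_{i,N_y+\frac12}=0$, where the interior fluxes are Rusanov (local Lax--Friedrichs) fluxes \[ F^x_{i+\frac12,j} = \tfrac12\big(\rho_{i,j}+\rho_{i+1,j}\big)\left(v^x_{i+\frac12,j} + \omega^x_{i+\frac12,j} \right) -\tfrac12 \left( a^x_{i+\frac12,j} + b^x_{i+\frac12,j} \right)\big(\rho_{i+1,j}-\rho_{i,j}\big), \] (and $F^y_{i,j+\frac12}$ defined analogously in the $y$-direction) with wave-speed parameters chosen as $ a^x_{i+\frac12,j} := |v^x_{i+\frac12,j}|,\ a^y_{i,j+\frac12} := |v^y_{i,j+\frac12}|, $ and polarization gradient parameters $ b^x_{i+\frac12,j} := |\omega^x_{i+\frac12,j}|,\ b^y_{i,j+\frac12} := |\omega^y_{i,j+\frac12}|. $ If the $z$-step satisfies the global CFL condition \[ \Delta z\left( \frac{\max_{i,j} c^x_{i+\frac12,j}}{\Delta x} + \frac{\max_{i,j} c^y_{i,j+\frac12}}{\Delta y} \right)\le \frac{1}{2}, \] where $c^x_{i+\frac12,j} = a^x_{i+\frac12,j}+b^x_{i+\frac12,j}$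 and $c^y_{i,j+\frac12} = a^y_{i,j+\frac12}+b^y_{i,j+\frac12}$, then the forward Euler update yields $\rho^{+}_{i,j}\ge 0$ for all cells. Consequently, the third-order SSP Runge--Kutta scheme (SSP-RK3) preserves nonnegativity under the same CFL condition.
   Context: Discretization of the intensity equation $\partial_z \rho + \frac{1}{k_0}\nabla\cdot(\rho(\nabla\phi+\nabla\gamma))=0$ on a uniform Cartesian grid of $\Omega=(-L,L)^2$ with cell centers $x_i=-L+(i-\tfrac12)\Delta x$, $y_j=-L+(j-\tfrac12)\Delta y$, $i=1,\dots,N_x$, $j=1,\dots,N_y$, $\Delta x=2L/N_x$, $\Delta y=2L/N_y$; $k_0>0$ is the wavenumber. Cell-centered velocities and polarization gradients are $v^x_{i,j}=\frac1{k_0}(D_x^0\phi)_{i,j}$, $\omega^x_{i,j}=\frac1{k_0}(D_x^0\gamma)_{i,j}$ (centered differences with Neumann ghost-cell reflection), and face values are arithmetic averages $v^x_{i+\frac12,j}=\tfrac12(v^x_{i,j}+v^x_{i+1,j})$, $\omega^x_{i+\frac12,j}=\tfrac12(\omega^x_{i,j}+\omega^x_{i+1,j})$, analogously in $y$. SSP-RK3 for $U'=\mathcal R(U)$ is $U^{(1)}=U^n+\Delta z\mathcal R(U^n)$, $U^{(2)}=\tfrac34U^n+\tfrac14(U^{(1)}+\Delta z\mathcal R(U^{(1)}))$, $U^{n+1}=\tfrac13U^n+\tfrac23(U^{(2)}+\Delta z\mathcal R(U^{(2)}))$, i.e. a convex combination of forward Euler steps. *)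

theory Defs
  imports Complex_Main
begin

text \<open>Cells are indexed by i = 1..Nx, j = 1..Ny. A face index i stands for the
face i+1/2 (i = 0..Nx), and similarly in y. Grid functions are nat => nat => real;
only values on cells are relevant.\<close>

definition dx :: "real \<Rightarrow> nat \<Rightarrow> real" where
  "dx L N = 2 * L / real N"

text \<open>Neumann ghost-cell reflection: f_0 = f_1, f_{N+1} = f_N.\<close>
definition reflect :: "nat \<Rightarrow> (nat \<Rightarrow> real) \<Rightarrow> nat \<Rightarrow> real" where
  "reflect N f i = (if i = 0 then f 1 else if i = N + 1 then f N else f i)"

definition D0 :: "real \<Rightarrow> nat \<Rightarrow> (nat \<Rightarrow> real) \<Rightarrow> nat \<Rightarrow> real" where
  "D0 h N f i = (reflect N f (i + 1) - reflect N f (i - 1)) / (2 * h)"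

text \<open>Cell-centered quantities (1/k0) D^0_x psi and (1/k0) D^0_y psi
 (psi = phi gives v, psi = gamma gives omega).\<close>
definition cellx :: "real \<Rightarrow> real \<Rightarrow> nat \<Rightarrow> (nat \<Rightarrow> nat \<Rightarrow> real) \<Rightarrow> nat \<Rightarrow> nat \<Rightarrow> real" where
  "cellx k0 L Nx psi i j = (1 / k0) * D0 (dx L Nx) Nx (\<lambda>i'. psi i' j) i"

definition celly :: "real \<Rightarrow> real \<Rightarrow> nat \<Rightarrow> (nat \<Rightarrow> nat \<Rightarrow> real) \<Rightarrow> nat \<Rightarrow> nat \<Rightarrow> real" where
  "celly k0 L Ny psi i j = (1 / k0) * D0 (dx L Ny) Ny (\<lambda>j'. psi i j') j"

definition facex :: "real \<Rightarrow> real \<Rightarrow> nat \<Rightarrow> (nat \<Rightarrow> nat \<Rightarrow> real) \<Rightarrow> nat \<Rightarrow> nat \<Rightarrow> real" where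
  "facex k0 L Nx psi i j = (cellx k0 L Nx psi i j + cellx k0 L Nx psi (i + 1) j) / 2"

definition facey :: "real \<Rightarrow> real \<Rightarrow> nat \<Rightarrow> (nat \<Rightarrow> nat \<Rightarrow> real) \<Rightarrow> nat \<Rightarrow> nat \<Rightarrow> real" where
  "facey k0 L Ny psi i j = (celly k0 L Ny psi i j + celly k0 L Ny psi i (j + 1)) / 2"

definition rusanov :: "real \<Rightarrow> real \<Rightarrow> real \<Rightarrow> real \<Rightarrow> real" where
  "rusanov rl rr v w = (rl + rr) / 2 * (v + w) - (\<bar>v\<bar> + \<bar>w\<bar>) / 2 * (rr - rl)"

definition fluxx :: "real \<Rightarrow> real \<Rightarrow> nat \<Rightarrow> (nat \<Rightarrow> nat \<Rightarrow> real) \<Rightarrow> (nat \<Rightarrow> nat \<Rightarrow> real)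
    \<Rightarrow> (nat \<Rightarrow> nat \<Rightarrow> real) \<Rightarrow> nat \<Rightarrow> nat \<Rightarrow> real" where
  "fluxx k0 L Nx phi gam rho i j =
     (if 1 \<le> i \<and> i < Nx
      then rusanov (rho i j) (rho (i + 1) j) (facex k0 L Nx phi i j) (facex k0 L Nx gam i j)
      else 0)"

definition fluxy :: "real \<Rightarrow> real \<Rightarrow> nat \<Rightarrow> (nat \<Rightarrow> nat \<Rightarrow> real) \<Rightarrow> (nat \<Rightarrow> nat \<Rightarrow> real)
    \<Rightarrow> (nat \<Rightarrow> nat \<Rightarrow> real) \<Rightarrow> nat \<Rightarrow> nat \<Rightarrow> real" where
  "fluxy k0 L Ny phi gam rho i j =
     (if 1 \<le> j \<and> j < Ny
      then rusanov (rho i j) (rho i (j + 1)) (facey k0 L Ny phi i j) (facey k0 L Ny gam i j)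
      else 0)"

definition resid :: "real \<Rightarrow> real \<Rightarrow> nat \<Rightarrow> nat \<Rightarrow> (nat \<Rightarrow> nat \<Rightarrow> real) \<Rightarrow> (nat \<Rightarrow> nat \<Rightarrow> real)
    \<Rightarrow> (nat \<Rightarrow> nat \<Rightarrow> real) \<Rightarrow> nat \<Rightarrow> nat \<Rightarrow> real" where
  "resid k0 L Nx Ny phi gam rho i j =
     - ((fluxx k0 L Nx phi gam rho i j - fluxx k0 L Nx phi gam rho (i - 1) j) / dx L Nx
        + (fluxy k0 L Ny phi gam rho i j - fluxy k0 L Ny phi gam rho i (j - 1)) / dx L Ny)"

definition euler :: "real \<Rightarrow> real \<Rightarrow> real \<Rightarrow> nat \<Rightarrow> nat \<Rightarrow> (nat \<Rightarrow> nat \<Rightarrow> real) \<Rightarrow> (nat \<Rightarrow> nat \<Rightarrow> real)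
    \<Rightarrow> (nat \<Rightarrow> nat \<Rightarrow> real) \<Rightarrow> nat \<Rightarrow> nat \<Rightarrow> real" where
  "euler dz k0 L Nx Ny phi gam rho = (\<lambda>i j. rho i j + dz * resid k0 L Nx Ny phi gam rho i j)"

definition ssprk3 :: "real \<Rightarrow> real \<Rightarrow> real \<Rightarrow> nat \<Rightarrow> nat \<Rightarrow> (nat \<Rightarrow> nat \<Rightarrow> real) \<Rightarrow> (nat \<Rightarrow> nat \<Rightarrow> real)
    \<Rightarrow> (nat \<Rightarrow> nat \<Rightarrow> real) \<Rightarrow> nat \<Rightarrow> nat \<Rightarrow> real" where
  "ssprk3 dz k0 L Nx Ny phi gam U =
     (let E = euler dz k0 L Nx Ny phi gam;
          U1 = E U;
          U2 = (\<lambda>i j. 3/4 * U i j + 1/4 * E U1 i j)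
      in (\<lambda>i j. 1/3 * U i j + 2/3 * E U2 i j))"

text \<open>Maximal wave speeds over the interior faces (max with 0 only to handle the
 degenerate case of no interior faces; all c's are nonnegative).\<close>
definition cmaxx :: "real \<Rightarrow> real \<Rightarrow> nat \<Rightarrow> nat \<Rightarrow> (nat \<Rightarrow> nat \<Rightarrow> real) \<Rightarrow> (nat \<Rightarrow> nat \<Rightarrow> real) \<Rightarrow> real" where
  "cmaxx k0 L Nx Ny phi gam = Max (insert 0
     {\<bar>facex k0 L Nx phi i j\<bar> + \<bar>facex k0 L Nx gam i j\<bar> | i j. 1 \<le> i \<and> i < Nx \<and> 1 \<le> j \<and> j \<le> Ny})"

definition cmaxy :: "real \<Rightarrow> real \<Rightarrow> nat \<Rightarrow> nat \<Rightarrow> (nat \<Rightarrow> nat \<Rightarrow> real) \<Rightarrow> (nat \<Rightarrow> nat \<Rightarrow> real) \<Rightarrow> real" where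
  "cmaxy k0 L Nx Ny phi gam = Max (insert 0
     {\<bar>facey k0 L Ny phi i j\<bar> + \<bar>facey k0 L Ny gam i j\<bar> | i j. 1 \<le> i \<and> i \<le> Nx \<and> 1 \<le> j \<and> j < Ny})"

end

theory Submission
  imports Defs
begin

lemma rus_decomp: "rusanov rl rr v w = rl * ((v+w) + (\<bar>v\<bar>+\<bar>w\<bar>))/2 + rr*((v+w) - (\<bar>v\<bar>+\<bar>w\<bar>))/2"
  by (simp add: rusanov_def field_simps)

lemma rus_upper:
  assumes "rl \<ge> 0" "rr \<ge> 0" "\<bar>v\<bar>+\<bar>w\<bar> \<le> C"
  shows "rusanov rl rr v w \<le> rl * C"
proof -
  have a: "rr*((v+w) - (\<bar>v\<bar>+\<bar>w\<bar>))/2 \<le> 0"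
    using assms(2) by (intro divide_nonpos_pos mult_nonneg_nonpos) auto
  have b: "rl * ((v+w) + (\<bar>v\<bar>+\<bar>w\<bar>))/2 \<le> rl * C"
  proof -
    have "((v+w) + (\<bar>v\<bar>+\<bar>w\<bar>))/2 \<le> C" using assms(3) by (auto simp: abs_if field_simps)
    hence "rl * (((v+w) + (\<bar>v\<bar>+\<bar>w\<bar>))/2) \<le> rl * C" using assms(1) by (intro mult_left_mono)
    thus ?thesis by simp
  qed
  show ?thesis using a b rus_decomp[of rl rr v w] by linarith
qed

lemma rus_lower:
  assumes "rl \<ge> 0" "rr \<ge> 0" "\<bar>v\<bar>+\<bar>w\<bar> \<le> C"
  shows "rusanov rl rr v w \<ge> - rr * C"
proof -
  have a: "rl * ((v+w) + (\<bar>v\<bar>+\<bar>w\<bar>))/2 \<ge> 0"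
    using assms(1) by (intro divide_nonneg_pos mult_nonneg_nonneg) auto
  have b: "rr*((v+w) - (\<bar>v\<bar>+\<bar>w\<bar>))/2 \<ge> - rr * C"
  proof -
    have "((v+w) - (\<bar>v\<bar>+\<bar>w\<bar>))/2 \<ge> - C" using assms(3) by (auto simp: abs_if field_simps)
    hence "rr * (((v+w) - (\<bar>v\<bar>+\<bar>w\<bar>))/2) \<ge> rr * (-C)" using assms(2) by (intro mult_left_mono)
    thus ?thesis by simp
  qed
  show ?thesis using a b rus_decomp[of rl rr v w] by linarith
qed

lemma cmaxx_ge:
  assumes "1 \<le> i" "i < Nx" "1 \<le> j" "j \<le> Ny"
  shows "\<bar>facex k0 L Nx phi i j\<bar> + \<bar>facex k0 L Nx gam i j\<bar> \<le> cmaxx k0 L Nx Ny phi gam"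
proof -
  let ?S = "{\<bar>facex k0 L Nx phi i j\<bar> + \<bar>facex k0 L Nx gam i j\<bar> | i j. 1 \<le> i \<and> i < Nx \<and> 1 \<le> j \<and> j \<le> Ny}"
  have "?S \<subseteq> (\<lambda>(i,j). \<bar>facex k0 L Nx phi i j\<bar> + \<bar>facex k0 L Nx gam i j\<bar>) ` ({1..<Nx} \<times> {1..Ny})"
    by auto
  hence "finite ?S" by (rule finite_subset) auto
  moreover have "\<bar>facex k0 L Nx phi i j\<bar> + \<bar>facex k0 L Nx gam i j\<bar> \<in> ?S" using assms by blast
  ultimately show ?thesis unfolding cmaxx_def by (intro Max_ge) auto
qed

lemma cmaxy_ge:
  assumes "1 \<le> i" "i \<le> Nx" "1 \<le> j" "j < Ny"
  shows "\<bar>facey k0 L Ny phi i j\<bar> + \<bar>facey k0 L Ny gam i j\<bar> \<le> cmaxy k0 L Nx Ny phi gam"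
proof -
  let ?S = "{\<bar>facey k0 L Ny phi i j\<bar> + \<bar>facey k0 L Ny gam i j\<bar> | i j. 1 \<le> i \<and> i \<le> Nx \<and> 1 \<le> j \<and> j < Ny}"
  have "?S \<subseteq> (\<lambda>(i,j). \<bar>facey k0 L Ny phi i j\<bar> + \<bar>facey k0 L Ny gam i j\<bar>) ` ({1..Nx} \<times> {1..<Ny})"
    by auto
  hence "finite ?S" by (rule finite_subset) auto
  moreover have "\<bar>facey k0 L Ny phi i j\<bar> + \<bar>facey k0 L Ny gam i j\<bar> \<in> ?S" using assms by blast
  ultimately show ?thesis unfolding cmaxy_def by (intro Max_ge) auto
qed

lemma cmaxx_nn: "cmaxx k0 L Nx Ny phi gam \<ge> 0"
proof -
  let ?S = "{\<bar>facex k0 L Nx phi i j\<bar> + \<bar>facex k0 L Nx gam i j\<bar> | i j. 1 \<le> i \<and> i < Nx \<and> 1 \<le> j \<and> j \<le> Ny}"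
  have "?S \<subseteq> (\<lambda>(i,j). \<bar>facex k0 L Nx phi i j\<bar> + \<bar>facex k0 L Nx gam i j\<bar>) ` ({1..<Nx} \<times> {1..Ny})"
    by auto
  hence "finite ?S" by (rule finite_subset) auto
  thus ?thesis unfolding cmaxx_def by (intro Max_ge) auto
qed

lemma cmaxy_nn: "cmaxy k0 L Nx Ny phi gam \<ge> 0"
proof -
  let ?S = "{\<bar>facey k0 L Ny phi i j\<bar> + \<bar>facey k0 L Ny gam i j\<bar> | i j. 1 \<le> i \<and> i \<le> Nx \<and> 1 \<le> j \<and> j < Ny}"
  have "?S \<subseteq> (\<lambda>(i,j). \<bar>facey k0 L Ny phi i j\<bar> + \<bar>facey k0 L Ny gam i j\<bar>) ` ({1..Nx} \<times> {1..<Ny})"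
    by auto
  hence "finite ?S" by (rule finite_subset) auto
  thus ?thesis unfolding cmaxy_def by (intro Max_ge) auto
qed

lemma euler_nonneg:
  fixes k0 L dz :: real and Nx Ny :: nat
    and phi gam rho :: "nat \<Rightarrow> nat \<Rightarrow> real"
  assumes "L > 0" and "Nx \<ge> 1" and "Ny \<ge> 1" and "dz \<ge> 0"
    and nonneg: "\<And>i j. 1 \<le> i \<Longrightarrow> i \<le> Nx \<Longrightarrow> 1 \<le> j \<Longrightarrow> j \<le> Ny \<Longrightarrow> rho i j \<ge> 0"
    and CFL: "dz * (cmaxx k0 L Nx Ny phi gam / dx L Nx + cmaxy k0 L Nx Ny phi gam / dx L Ny) \<le> 1 / 2"
    and ij: "1 \<le> i" "i \<le> Nx" "1 \<le> j" "j \<le> Ny"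
  shows "euler dz k0 L Nx Ny phi gam rho i j \<ge> 0"
proof -
  let ?Cx = "cmaxx k0 L Nx Ny phi gam" and ?Cy = "cmaxy k0 L Nx Ny phi gam"
  let ?r = "rho i j"
  have r0: "?r \<ge> 0" using nonneg ij by auto
  have dxp: "dx L Nx > 0" "dx L Ny > 0" using assms(1-3) by (auto simp: dx_def)
  have x1: "fluxx k0 L Nx phi gam rho i j \<le> ?r * ?Cx"
  proof (cases "i < Nx")
    case True
    show ?thesis using True ij unfolding fluxx_def
      by (auto intro!: rus_upper nonneg cmaxx_ge)
  next
    case False
    thus ?thesis using r0 cmaxx_nn[of k0 L Nx Ny phi gam] by (simp add: fluxx_def)
  qed
  have x2: "fluxx k0 L Nx phi gam rho (i-1) j \<ge> - ?r * ?Cx"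
  proof (cases "2 \<le> i")
    case True
    have "rusanov (rho (i-1) j) (rho (i - 1 + 1) j) (facex k0 L Nx phi (i-1) j) (facex k0 L Nx gam (i-1) j) \<ge> - rho (i-1+1) j * ?Cx"
      using True ij by (intro rus_lower nonneg cmaxx_ge) auto
    thus ?thesis using True ij unfolding fluxx_def by auto
  next
    case False
    thus ?thesis using r0 cmaxx_nn[of k0 L Nx Ny phi gam] by (simp add: fluxx_def)
  qed
  have y1: "fluxy k0 L Ny phi gam rho i j \<le> ?r * ?Cy"
  proof (cases "j < Ny")
    case True
    show ?thesis using True ij unfolding fluxy_def
      by (auto intro!: rus_upper nonneg cmaxy_ge)
  next
    case False
    thus ?thesis using r0 cmaxy_nn[of k0 L Nx Ny phi gam] by (simp add: fluxy_def)
  qed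
  have y2: "fluxy k0 L Ny phi gam rho i (j-1) \<ge> - ?r * ?Cy"
  proof (cases "2 \<le> j")
    case True
    have "rusanov (rho i (j-1)) (rho i (j - 1 + 1)) (facey k0 L Ny phi i (j-1)) (facey k0 L Ny gam i (j-1)) \<ge> - rho i (j-1+1) * ?Cy"
      using True ij by (intro rus_lower nonneg cmaxy_ge) auto
    thus ?thesis using True ij unfolding fluxy_def by auto
  next
    case False
    thus ?thesis using r0 cmaxy_nn[of k0 L Nx Ny phi gam] by (simp add: fluxy_def)
  qed
  have X: "(fluxx k0 L Nx phi gam rho i j - fluxx k0 L Nx phi gam rho (i-1) j) / dx L Nx \<le> 2 * ?r * ?Cx / dx L Nx"
    using x1 x2 dxp by (intro divide_right_mono) auto
  have Y: "(fluxy k0 L Ny phi gam rho i j - fluxy k0 L Ny phi gam rho i (j-1)) / dx L Ny \<le> 2 * ?r * ?Cy / dx L Ny"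
    using y1 y2 dxp by (intro divide_right_mono) auto
  have "resid k0 L Nx Ny phi gam rho i j \<ge> - (2 * ?r * ?Cx / dx L Nx + 2 * ?r * ?Cy / dx L Ny)"
    unfolding resid_def using X Y by linarith
  hence "dz * resid k0 L Nx Ny phi gam rho i j \<ge> dz * (- (2 * ?r * ?Cx / dx L Nx + 2 * ?r * ?Cy / dx L Ny))"
    using assms(4) by (intro mult_left_mono) auto
  moreover have "dz * (- (2 * ?r * ?Cx / dx L Nx + 2 * ?r * ?Cy / dx L Ny)) = - 2 * ?r * (dz * (?Cx / dx L Nx + ?Cy / dx L Ny))"
    by (simp add: field_simps)
  moreover have "2 * ?r * (dz * (?Cx / dx L Nx + ?Cy / dx L Ny)) \<le> 2 * ?r * (1/2)"
    using CFL r0 by (intro mult_left_mono) auto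
  ultimately show ?thesis unfolding euler_def by simp
qed

theorem proposition4p3:
  fixes k0 L dz :: real and Nx Ny :: nat
    and phi gam rho :: "nat \<Rightarrow> nat \<Rightarrow> real"
  assumes "k0 > 0" and "L > 0" and "Nx \<ge> 1" and "Ny \<ge> 1" and "dz \<ge> 0"
    and nonneg: "\<And>i j. 1 \<le> i \<Longrightarrow> i \<le> Nx \<Longrightarrow> 1 \<le> j \<Longrightarrow> j \<le> Ny \<Longrightarrow> rho i j \<ge> 0"
    and CFL: "dz * (cmaxx k0 L Nx Ny phi gam / dx L Nx + cmaxy k0 L Nx Ny phi gam / dx L Ny) \<le> 1 / 2"
  shows "(\<forall>i j. 1 \<le> i \<and> i \<le> Nx \<and> 1 \<le> j \<and> j \<le> Ny \<longrightarrow> euler dz k0 L Nx Ny phi gam rho i j \<ge> 0)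
       \<and> (\<forall>i j. 1 \<le> i \<and> i \<le> Nx \<and> 1 \<le> j \<and> j \<le> Ny \<longrightarrow> ssprk3 dz k0 L Nx Ny phi gam rho i j \<ge> 0)"
proof -
  let ?E = "euler dz k0 L Nx Ny phi gam"
  have E: "\<And>U i j. (\<And>i j. 1 \<le> i \<Longrightarrow> i \<le> Nx \<Longrightarrow> 1 \<le> j \<Longrightarrow> j \<le> Ny \<Longrightarrow> U i j \<ge> 0)
     \<Longrightarrow> 1 \<le> i \<Longrightarrow> i \<le> Nx \<Longrightarrow> 1 \<le> j \<Longrightarrow> j \<le> Ny \<Longrightarrow> ?E U i j \<ge> 0"
    using euler_nonneg[OF assms(2-5) _ CFL] by blast
  have U1: "\<And>i j. 1 \<le> i \<Longrightarrow> i \<le> Nx \<Longrightarrow> 1 \<le> j \<Longrightarrow> j \<le> Ny \<Longrightarrow> ?E rho i j \<ge> 0"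
    using E nonneg by blast
  have U1': "\<And>i j. 1 \<le> i \<Longrightarrow> i \<le> Nx \<Longrightarrow> 1 \<le> j \<Longrightarrow> j \<le> Ny \<Longrightarrow> ?E (?E rho) i j \<ge> 0"
    using E U1 by blast
  let ?U2 = "\<lambda>i j. 3/4 * rho i j + 1/4 * ?E (?E rho) i j"
  have U2: "\<And>i j. 1 \<le> i \<Longrightarrow> i \<le> Nx \<Longrightarrow> 1 \<le> j \<Longrightarrow> j \<le> Ny \<Longrightarrow> ?U2 i j \<ge> 0"
    using U1' nonneg by fastforce
  have U3: "\<And>i j. 1 \<le> i \<Longrightarrow> i \<le> Nx \<Longrightarrow> 1 \<le> j \<Longrightarrow> j \<le> Ny \<Longrightarrow> ?E ?U2 i j \<ge> 0"
    using E[of ?U2] U2 by blast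
  show ?thesis
    using U1 U3 nonneg unfolding ssprk3_def Let_def by fastforce
qed

end
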